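(* For every integer $n\ge 0$, there exist two DFAs, each with at most $n+1$ states, over an alphabet of cardinality $\frac{n(n+1)}{2}+1$, such that there is a tower of height $2^{n}$ between their languages and there is no infinite tower between their languages.
   Context: For strings $v=a_1\cdots a_k$ and $w$, $v\preccurlyeq w$ if $w\in\Sigma^*a_1\Sigma^*a_2\Sigma^*\cdots\Sigma^*a_k\Sigma^*$. A sequence $(w_i)_{i=1}^r$ of strings is a tower between languages $K$ and $L$ if $w_1\in K\cup L$ and for all $i=1,\dots,r-1$: $w_i\preccurlyeq w_{i+1}$, $w_i\in K$ implies $w_{i+1}\in L$, and $w_i\in L$ implies $w_{i+1}\in K$; $r$ is its height. An infinite tower is an infinite sequence with the same properties. *)

theory Defs
  imports "HOL-Library.Sublist"
begin

definition is_dfa :: "'q set \<Rightarrow> 'a set \<Rightarrow> ('q \<Rightarrow> 'a \<Rightarrow> 'q) \<Rightarrow> 'q \<Rightarrow> 'q set \<Rightarrow> bool" where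
  "is_dfa Q Sig delta q0 F \<longleftrightarrow>
     finite Q \<and> finite Sig \<and> q0 \<in> Q \<and> F \<subseteq> Q \<and>
     (\<forall>q\<in>Q. \<forall>a\<in>Sig. delta q a \<in> Q)"

definition dfa_lang :: "'a set \<Rightarrow> ('q \<Rightarrow> 'a \<Rightarrow> 'q) \<Rightarrow> 'q \<Rightarrow> 'q set \<Rightarrow> 'a list set" where
  "dfa_lang Sig delta q0 F = {w. set w \<subseteq> Sig \<and> foldl delta q0 w \<in> F}"

text \<open>A (finite) tower between K and L; its height is the length of the list.
The scattered-subword relation is the library's subseq.\<close>
definition is_tower :: "'a list set \<Rightarrow> 'a list set \<Rightarrow> 'a list list \<Rightarrow> bool" where
  "is_tower K L ws \<longleftrightarrow> ws \<noteq> [] \<and> hd ws \<in> K \<union> L \<and>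
     (\<forall>i. Suc i < length ws \<longrightarrow>
        subseq (ws ! i) (ws ! Suc i) \<and>
        (ws ! i \<in> K \<longrightarrow> ws ! Suc i \<in> L) \<and>
        (ws ! i \<in> L \<longrightarrow> ws ! Suc i \<in> K))"

definition is_infinite_tower :: "'a list set \<Rightarrow> 'a list set \<Rightarrow> (nat \<Rightarrow> 'a list) \<Rightarrow> bool" where
  "is_infinite_tower K L w \<longleftrightarrow> w 0 \<in> K \<union> L \<and>
     (\<forall>i. subseq (w i) (w (Suc i)) \<and>
        (w i \<in> K \<longrightarrow> w (Suc i) \<in> L) \<and>
        (w i \<in> L \<longrightarrow> w (Suc i) \<in> K))"

end

theory Submission
  imports Defs
begin


definition dA :: "nat \<Rightarrow> nat \<Rightarrow> nat" where
  "dA q a = (if q = 1 then 1 else if q = 0 then (if a = 1 then 1 else a)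
             else if a < q then q else if a = q then 1 else a)"

definition dB :: "nat \<Rightarrow> nat \<Rightarrow> nat" where
  "dB q a = (if q = 2 then 2 else if q = 0 then (if a = 1 then 1 else 2)
             else if q = 1 then (if a = 1 then 2 else if a = 2 then 0 else a)
             else if a < q then q else if a = q then 2 else a)"

definition KK :: "nat \<Rightarrow> nat list set" where
  "KK n = {w. set w \<subseteq> {1..n} \<and> foldl dA 0 w \<noteq> 1}"

definition LL :: "nat \<Rightarrow> nat list set" where
  "LL n = {w. set w \<subseteq> {1..n} \<and> foldl dB 0 w \<notin> {0,2}}"

lemma sinkA: "foldl dA 1 w = 1"
  by (induction w) (auto simp: dA_def)

lemma sinkB: "foldl dB 2 w = 2"
  by (induction w) (auto simp: dB_def)

lemma loopA: "2 \<le> q \<Longrightarrow> \<forall>a\<in>set v. a < q \<Longrightarrow> foldl dA q v = q"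
  by (induction v) (auto simp: dA_def)

lemma loopB: "3 \<le> q \<Longrightarrow> \<forall>a\<in>set v. a < q \<Longrightarrow> foldl dB q v = q"
  by (induction v) (auto simp: dB_def)

lemma boundA: "q \<le> n \<Longrightarrow> set w \<subseteq> {1..n} \<Longrightarrow> 1 \<le> n \<Longrightarrow> foldl dA q w \<le> n"
proof (induction w arbitrary: q)
  case (Cons a w)
  have "dA q a \<le> n" using Cons.prems by (auto simp: dA_def)
  then show ?case using Cons by auto
qed simp

lemma boundB: "q \<le> n \<Longrightarrow> set w \<subseteq> {1..n} \<Longrightarrow> 2 \<le> n \<Longrightarrow> foldl dB q w \<le> n"
proof (induction w arbitrary: q)
  case (Cons a w)
  have "dB q a \<le> n" using Cons.prems by (auto simp: dB_def)
  then show ?case using Cons by auto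
qed simp

lemma disjKL: "KK n \<inter> LL n = {}"
proof (safe)
  fix w assume k: "w \<in> KK n" and l: "w \<in> LL n"
  show "w \<in> {}"
  proof (cases w)
    case Nil then show ?thesis using l by (auto simp: LL_def)
  next
    case (Cons a v)
    show ?thesis
    proof (cases "a = 1")
      case True then show ?thesis using k Cons sinkA by (auto simp: KK_def dA_def)
    next
      case False then show ?thesis using l Cons sinkB by (auto simp: LL_def dB_def)
    qed
  qed
qed

lemma K_mono: "KK n \<subseteq> KK (Suc n)" by (auto simp: KK_def)
lemma L_mono: "LL n \<subseteq> LL (Suc n)" by (auto simp: LL_def)

lemma set_down: "set w \<subseteq> {1..Suc n} \<Longrightarrow> Suc n \<notin> set w \<Longrightarrow> set w \<subseteq> {1..n}"
  by (auto simp: subset_iff le_Suc_eq)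

lemma K_down: "w \<in> KK (Suc n) \<Longrightarrow> Suc n \<notin> set w \<Longrightarrow> w \<in> KK n"
  using set_down by (auto simp: KK_def)
lemma L_down: "w \<in> LL (Suc n) \<Longrightarrow> Suc n \<notin> set w \<Longrightarrow> w \<in> LL n"
  using set_down by (auto simp: LL_def)

lemma K_comp:
  assumes "1 \<le> n" "u \<in> KK n" "set z \<subseteq> {1..n}"
  shows "u @ [Suc n] @ z \<in> KK (Suc n)"
proof -
  define q where "q = foldl dA 0 u"
  have q1: "q \<noteq> 1" "q \<le> n" using assms boundA[of 0 n u] by (auto simp: q_def KK_def)
  have "dA q (Suc n) = Suc n" using q1 assms(1) by (auto simp: dA_def)
  moreover have "foldl dA (Suc n) z = Suc n" using assms(1,3) by (intro loopA) auto
  ultimately have "foldl dA 0 (u @ [Suc n] @ z) = Suc n" by (simp add: q_def)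
  then show ?thesis using assms by (auto simp: KK_def)
qed

lemma L_comp:
  assumes "2 \<le> n" "u \<in> LL n" "set z \<subseteq> {1..n}"
  shows "u @ [Suc n] @ z \<in> LL (Suc n)"
proof -
  define q where "q = foldl dB 0 u"
  have q1: "q \<notin> {0,2}" "q \<le> n" using assms boundB[of 0 n u] by (auto simp: q_def LL_def)
  have "dB q (Suc n) = Suc n" using q1 assms(1) by (auto simp: dB_def)
  moreover have "foldl dB (Suc n) z = Suc n" using assms(1,3) by (intro loopB) auto
  ultimately have "foldl dB 0 (u @ [Suc n] @ z) = Suc n" by (simp add: q_def)
  then show ?thesis using assms by (auto simp: LL_def)
qed

lemma K_dec:
  assumes "1 \<le> n" "w \<in> KK (Suc n)" "Suc n \<in> set w"
  shows "\<exists>u v. w = u @ Suc n # v \<and> Suc n \<notin> set u \<and> Suc n \<notin> set v \<and> u \<in> KK n"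
proof -
  obtain u v where w: "w = u @ Suc n # v" and cu: "Suc n \<notin> set u"
    using split_list_first[OF assms(3)] by blast
  have "set u \<subseteq> {1..Suc n}" using assms(2) w by (auto simp: KK_def)
  then have su: "set u \<subseteq> {1..n}" using cu by (rule set_down)
  have sv: "set v \<subseteq> {1..Suc n}" using assms(2) w by (auto simp: KK_def)
  define q where "q = foldl dA 0 u"
  have qn: "q \<le> n" using boundA[of 0 n u] su assms(1) by (simp add: q_def)
  have fw: "foldl dA 0 w = foldl dA (dA q (Suc n)) v" by (simp add: w q_def)
  have q1: "q \<noteq> 1"
  proof
    assume "q = 1"
    then have "foldl dA 0 w = 1" using fw sinkA by (simp add: dA_def)
    then show False using assms(2) by (auto simp: KK_def)
  qed
  have dq: "dA q (Suc n) = Suc n" using q1 qn assms(1) by (auto simp: dA_def)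
  have cv: "Suc n \<notin> set v"
  proof
    assume cin: "Suc n \<in> set v"
    obtain v1 v2 where v: "v = v1 @ Suc n # v2" and c1: "Suc n \<notin> set v1"
      using split_list_first[OF cin] by blast
    have "\<forall>a\<in>set v1. a < Suc n"
    proof
      fix a assume a: "a \<in> set v1"
      then have "a \<le> Suc n" using sv v by auto
      moreover have "a \<noteq> Suc n" using a c1 by auto
      ultimately show "a < Suc n" by simp
    qed
    then have "foldl dA (Suc n) v1 = Suc n" using assms(1) by (intro loopA) auto
    moreover have "dA (Suc n) (Suc n) = 1" by (simp add: dA_def)
    ultimately have "foldl dA 0 w = 1" using fw dq v sinkA by simp
    then show False using assms(2) by (auto simp: KK_def)
  qed
  show ?thesis using w cu cv q1 su by (auto simp: KK_def q_def)
qed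

lemma L_dec:
  assumes "2 \<le> n" "w \<in> LL (Suc n)" "Suc n \<in> set w"
  shows "\<exists>u v. w = u @ Suc n # v \<and> Suc n \<notin> set u \<and> Suc n \<notin> set v \<and> u \<in> LL n"
proof -
  obtain u v where w: "w = u @ Suc n # v" and cu: "Suc n \<notin> set u"
    using split_list_first[OF assms(3)] by blast
  have "set u \<subseteq> {1..Suc n}" using assms(2) w by (auto simp: LL_def)
  then have su: "set u \<subseteq> {1..n}" using cu by (rule set_down)
  have sv: "set v \<subseteq> {1..Suc n}" using assms(2) w by (auto simp: LL_def)
  define q where "q = foldl dB 0 u"
  have qn: "q \<le> n" using boundB[of 0 n u] su assms(1) by (simp add: q_def)
  have fw: "foldl dB 0 w = foldl dB (dB q (Suc n)) v" by (simp add: w q_def)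
  have q1: "q \<notin> {0,2}"
  proof
    assume "q \<in> {0,2}"
    then have "foldl dB 0 w = 2" using fw sinkB assms(1) by (auto simp: dB_def)
    then show False using assms(2) by (auto simp: LL_def)
  qed
  have dq: "dB q (Suc n) = Suc n" using q1 qn assms(1) by (auto simp: dB_def)
  have cv: "Suc n \<notin> set v"
  proof
    assume cin: "Suc n \<in> set v"
    obtain v1 v2 where v: "v = v1 @ Suc n # v2" and c1: "Suc n \<notin> set v1"
      using split_list_first[OF cin] by blast
    have "\<forall>a\<in>set v1. a < Suc n"
    proof
      fix a assume a: "a \<in> set v1"
      then have "a \<le> Suc n" using sv v by auto
      moreover have "a \<noteq> Suc n" using a c1 by auto
      ultimately show "a < Suc n" by simp
    qed
    then have "foldl dB (Suc n) v1 = Suc n" using assms(1) by (intro loopB) auto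
    moreover have "dB (Suc n) (Suc n) = 2" using assms(1) by (simp add: dB_def)
    ultimately have "foldl dB 0 w = 2" using fw dq v sinkB by simp
    then show False using assms(2) by (auto simp: LL_def)
  qed
  show ?thesis using w cu cv q1 su by (auto simp: LL_def q_def)
qed

lemma sub_cut:
  assumes "subseq (u @ c # v) (u' @ c # v')" "c \<notin> set u'" "c \<notin> set v'"
  shows "subseq u u'"
proof -
  obtain us vs where e: "u' @ c # v' = us @ vs" and s1: "subseq u us" and s2: "subseq (c # v) vs"
    using list_emb_appendD[OF assms(1)] by blast
  have "subseq [c] (c # v)" by simp
  then have "subseq [c] vs" using s2 subseq_order.order_trans by blast
  then have cvs: "c \<in> set vs" by (simp add: subseq_singleton_left)
  obtain t where "u' = us @ t \<and> t @ c # v' = vs \<or> u' @ t = us \<and> c # v' = t @ vs"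
    using e by (auto simp: append_eq_append_conv2)
  then show ?thesis
  proof
    assume "u' = us @ t \<and> t @ c # v' = vs"
    then show ?thesis using s1 by (simp add: list_emb_prefix)
  next
    assume h: "u' @ t = us \<and> c # v' = t @ vs"
    show ?thesis
    proof (cases t)
      case Nil then show ?thesis using h s1 by simp
    next
      case (Cons x t')
      then have "v' = t' @ vs" using h by simp
      then show ?thesis using cvs assms(3) by simp
    qed
  qed
qed



lemma K2_hd: "w \<in> KK 2 \<Longrightarrow> w \<noteq> [] \<Longrightarrow> hd w = 2"
proof (cases w)
  case (Cons a v)
  assume k: "w \<in> KK 2"
  have a12: "a = 1 \<or> a = 2" using k Cons by (auto simp: KK_def)
  have "a \<noteq> 1"
  proof
    assume "a = 1"
    then have "foldl dA 0 w = 1" using Cons sinkA by (simp add: dA_def)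
    then show False using k by (simp add: KK_def)
  qed
  then show ?thesis using a12 Cons by simp
qed simp

lemma L2_hd: "w \<in> LL 2 \<Longrightarrow> w \<noteq> [] \<and> hd w = 1"
proof (cases w)
  case Nil
  assume "w \<in> LL 2" then show ?thesis using Nil by (simp add: LL_def)
next
  case (Cons a v)
  assume k: "w \<in> LL 2"
  have a12: "a = 1 \<or> a = 2" using k Cons by (auto simp: LL_def)
  have "a \<noteq> 2"
  proof
    assume "a = 2"
    then have "foldl dB 0 w = 2" using Cons sinkB by (simp add: dB_def)
    then show False using k by (simp add: LL_def)
  qed
  then show ?thesis using a12 Cons by simp
qed

lemma inv12: "q \<in> {1,2} \<Longrightarrow> set x \<subseteq> {1,2} \<Longrightarrow> foldl dA q x \<in> {1,2}"
proof (induction x arbitrary: q)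
  case (Cons a x)
  have "dA q a \<in> {1,2}" using Cons.prems by (auto simp: dA_def)
  then show ?case using Cons by simp
qed simp

lemma pre1: "set p \<subseteq> {1,2} \<Longrightarrow> foldl dA 0 (p @ [1]) \<in> {1,2}"
proof (cases p)
  case Nil then show ?thesis by (simp add: dA_def)
next
  case (Cons a p')
  assume sp: "set p \<subseteq> {1,2}"
  have "dA 0 a \<in> {1,2}" using sp Cons by (auto simp: dA_def)
  then have "foldl dA (dA 0 a) p' \<in> {1,2}" using sp Cons by (intro inv12) auto
  then have "dA (foldl dA (dA 0 a) p') 1 \<in> {1,2}" by (auto simp: dA_def)
  then show ?thesis using Cons by simp
qed

lemma dA12: "s \<in> {1,2} \<Longrightarrow> dA s 1 \<in> {1,2}" by (auto simp: dA_def)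

lemma K2_no12: "w \<in> KK 2 \<Longrightarrow> subseq [1,2] w \<Longrightarrow> False"
proof -
  assume k: "w \<in> KK 2" and s: "subseq [1,2] w"
  have sw: "set w \<subseteq> {1,2}" using k by (auto simp: KK_def)
  obtain us x vs where w: "w = us @ x # vs" and x: "1 = x" and s2: "subseq [2] vs"
    using list_emb_ConsD[OF s] by blast
  have "2 \<in> set vs" using s2 by (simp add: subseq_singleton_left)
  then obtain p2 r2 where vs: "vs = p2 @ 2 # r2" using split_list by metis
  have s1: "foldl dA 0 (us @ [1]) \<in> {1,2}" using sw w by (intro pre1) auto
  have "set p2 \<subseteq> {1,2}" using sw w vs by auto
  note s3 = inv12[OF s1 this]
  have d2: "\<And>s. s \<in> {1,2} \<Longrightarrow> dA s 2 = 1" by (auto simp: dA_def)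
  have "dA (foldl dA (foldl dA 0 (us @ [1])) p2) 2 = 1" using d2[OF s3] .
  then have "foldl dA 0 w = 1" using w x vs sinkA by simp
  then show False using k by (simp add: KK_def)
qed

lemma itower_mem: "is_infinite_tower K L w \<Longrightarrow> w i \<in> K \<union> L"
  by (induction i) (auto simp: is_infinite_tower_def)

lemma itower_le: assumes T: "is_infinite_tower K L w" and ij: "i \<le> j" shows "subseq (w i) (w j)"
  using ij
proof (induction j rule: dec_induct)
  case (step j)
  then show ?case using T subseq_order.order_trans unfolding is_infinite_tower_def by blast
qed simp

lemma itK: "is_infinite_tower K L w \<Longrightarrow> w i \<in> K \<Longrightarrow> w (Suc i) \<in> L"
  by (simp add: is_infinite_tower_def)
lemma itL: "is_infinite_tower K L w \<Longrightarrow> w i \<in> L \<Longrightarrow> w (Suc i) \<in> K"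
  by (simp add: is_infinite_tower_def)
lemma itS: "is_infinite_tower K L w \<Longrightarrow> subseq (w i) (w (Suc i))"
  by (simp add: is_infinite_tower_def)

lemma level2: "\<not> is_infinite_tower (KK 2) (LL 2) w"
proof
  assume T: "is_infinite_tower (KK 2) (LL 2) w"
  obtain j where j: "w j \<in> LL 2"
  proof (cases "w 0 \<in> LL 2")
    case True then show ?thesis using that by blast
  next
    case False
    then have "w 0 \<in> KK 2" using itower_mem[OF T, of 0] by blast
    then show ?thesis using that itK[OF T] by blast
  qed
  have k1: "w (Suc j) \<in> KK 2" using itL[OF T j] .
  have l2: "w (Suc (Suc j)) \<in> LL 2" using itK[OF T k1] .
  have k3: "w (Suc (Suc (Suc j))) \<in> KK 2" using itL[OF T l2] .
  have "w j \<noteq> []" using L2_hd[OF j] by simp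
  then have ne: "w (Suc j) \<noteq> []" using itS[OF T, of j] by auto
  then have "hd (w (Suc j)) = 2" using K2_hd k1 by blast
  then have "2 \<in> set (w (Suc j))" using ne by (cases "w (Suc j)") auto
  then have "subseq [2] (w (Suc j))" by (simp add: subseq_singleton_left)
  then have "subseq [2] (w (Suc (Suc j)))" using itS[OF T, of "Suc j"] subseq_order.order_trans by blast
  then have in2: "2 \<in> set (w (Suc (Suc j)))" by (simp add: subseq_singleton_left)
  obtain r where r: "w (Suc (Suc j)) = 1 # r" using L2_hd[OF l2] by (cases "w (Suc (Suc j))") auto
  have "2 \<in> set r" using in2 r by auto
  then have "subseq [2] r" by (simp add: subseq_singleton_left)
  then have "subseq [1,2] (w (Suc (Suc j)))" using r by simp
  then have "subseq [1,2] (w (Suc (Suc (Suc j))))" using itS[OF T, of "Suc (Suc j)"] subseq_order.order_trans by blast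
  then show False using K2_no12 k3 by blast
qed



lemma tw_cut: "c \<notin> set u \<Longrightarrow> takeWhile (\<lambda>x. x \<noteq> c) (u @ c # v) = u"
  by (induction u) auto

lemma step_noinf:
  assumes n2: "2 \<le> n" and IH: "\<And>w. \<not> is_infinite_tower (KK n) (LL n) w"
  shows "\<not> is_infinite_tower (KK (Suc n)) (LL (Suc n)) w"
proof
  assume T: "is_infinite_tower (KK (Suc n)) (LL (Suc n)) w"
  show False
  proof (cases "\<exists>i0. Suc n \<in> set (w i0)")
    case False
    then have nc: "\<And>i. Suc n \<notin> set (w i)" by blast
    have "is_infinite_tower (KK n) (LL n) w"
      unfolding is_infinite_tower_def
    proof (intro conjI allI impI)
      have "w 0 \<in> KK (Suc n) \<union> LL (Suc n)" using itower_mem[OF T, of 0] .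
      then show "w 0 \<in> KK n \<union> LL n" using K_down[OF _ nc] L_down[OF _ nc] by blast
    next
      fix i show "subseq (w i) (w (Suc i))" using itS[OF T] .
    next
      fix i assume "w i \<in> KK n"
      then have "w i \<in> KK (Suc n)" using K_mono by blast
      then have "w (Suc i) \<in> LL (Suc n)" using itK[OF T] by blast
      then show "w (Suc i) \<in> LL n" using L_down[OF _ nc] by blast
    next
      fix i assume "w i \<in> LL n"
      then have "w i \<in> LL (Suc n)" using L_mono by blast
      then have "w (Suc i) \<in> KK (Suc n)" using itL[OF T] by blast
      then show "w (Suc i) \<in> KK n" using K_down[OF _ nc] by blast
    qed
    then show False using IH by blast
  next
    case True
    then obtain i0 where i0: "Suc n \<in> set (w i0)" by blast
    define c where "c = Suc n"
    define w' where "w' k = takeWhile (\<lambda>x. x \<noteq> c) (w (i0 + k))" for k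
    have cin: "c \<in> set (w (i0 + k))" for k
    proof -
      have "subseq (w i0) (w (i0 + k))" using itower_le[OF T] by simp
      moreover have i0c: "c \<in> set (w i0)" using i0 c_def by simp
      ultimately obtain y where "y \<in> set (w (i0 + k))" "c = y" by (rule list_emb_set)
      then show ?thesis by simp
    qed
    have dec: "\<exists>u v. w (i0 + k) = u @ c # v \<and> c \<notin> set u \<and> c \<notin> set v \<and>
                 (w (i0 + k) \<in> KK (Suc n) \<longrightarrow> u \<in> KK n) \<and> (w (i0 + k) \<in> LL (Suc n) \<longrightarrow> u \<in> LL n)" for k
    proof (cases "w (i0 + k) \<in> KK (Suc n)")
      case True
      obtain u v where uv: "w (i0 + k) = u @ c # v" "c \<notin> set u" "c \<notin> set v" "u \<in> KK n"
        using K_dec[OF _ True] cin[of k] n2 c_def by auto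
      have "w (i0 + k) \<notin> LL (Suc n)" using True disjKL by blast
      then show ?thesis using uv by blast
    next
      case False
      then have L: "w (i0 + k) \<in> LL (Suc n)" using itower_mem[OF T, of "i0 + k"] by blast
      obtain u v where uv: "w (i0 + k) = u @ c # v" "c \<notin> set u" "c \<notin> set v" "u \<in> LL n"
        using L_dec[OF n2 L] cin[of k] c_def by auto
      then show ?thesis using False by blast
    qed
    have w'eq: "w (i0 + k) = u @ c # v \<Longrightarrow> c \<notin> set u \<Longrightarrow> w' k = u" for k u v
      by (simp add: w'_def tw_cut)
    have w'K: "w (i0 + k) \<in> KK (Suc n) \<Longrightarrow> w' k \<in> KK n" for k
    proof -
      assume h: "w (i0 + k) \<in> KK (Suc n)"
      obtain u v where "w (i0 + k) = u @ c # v" "c \<notin> set u" "w (i0 + k) \<in> KK (Suc n) \<longrightarrow> u \<in> KK n"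
        using dec[of k] by blast
      then show ?thesis using h w'eq by simp
    qed
    have w'L: "w (i0 + k) \<in> LL (Suc n) \<Longrightarrow> w' k \<in> LL n" for k
    proof -
      assume h: "w (i0 + k) \<in> LL (Suc n)"
      obtain u v where "w (i0 + k) = u @ c # v" "c \<notin> set u" "w (i0 + k) \<in> LL (Suc n) \<longrightarrow> u \<in> LL n"
        using dec[of k] by blast
      then show ?thesis using h w'eq by simp
    qed
    have "is_infinite_tower (KK n) (LL n) w'"
      unfolding is_infinite_tower_def
    proof (intro conjI allI)
      show "w' 0 \<in> KK n \<union> LL n" using itower_mem[OF T, of "i0 + 0"] w'K w'L by blast
    next
      fix k
      obtain u v where a: "w (i0 + k) = u @ c # v" "c \<notin> set u"
        using dec[of k] by blast
      obtain u' v' where b: "w (i0 + Suc k) = u' @ c # v'" "c \<notin> set u'" "c \<notin> set v'"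
        using dec[of "Suc k"] by blast
      have "subseq (w (i0 + k)) (w (i0 + Suc k))" using itS[OF T, of "i0 + k"] by simp
      then have "subseq (u @ c # v) (u' @ c # v')" using a b by simp
      then have "subseq u u'" using b(2,3) by (rule sub_cut)
      moreover have "w' k = u" using a w'eq by blast
      moreover have "w' (Suc k) = u'" using b w'eq by blast
      ultimately show "subseq (w' k) (w' (Suc k))" by simp
    next
      fix k
      show "w' k \<in> KK n \<longrightarrow> w' (Suc k) \<in> LL n"
      proof
        assume "w' k \<in> KK n"
        then have "w (i0 + k) \<notin> LL (Suc n)" using w'L disjKL by blast
        then have "w (i0 + k) \<in> KK (Suc n)" using itower_mem[OF T, of "i0 + k"] by blast
        then have "w (i0 + Suc k) \<in> LL (Suc n)" using itK[OF T, of "i0 + k"] by simp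
        then show "w' (Suc k) \<in> LL n" using w'L by blast
      qed
    next
      fix k
      show "w' k \<in> LL n \<longrightarrow> w' (Suc k) \<in> KK n"
      proof
        assume "w' k \<in> LL n"
        then have "w (i0 + k) \<notin> KK (Suc n)" using w'K disjKL by blast
        then have "w (i0 + k) \<in> LL (Suc n)" using itower_mem[OF T, of "i0 + k"] by blast
        then have "w (i0 + Suc k) \<in> KK (Suc n)" using itL[OF T, of "i0 + k"] by simp
        then show "w' (Suc k) \<in> KK n" using w'K by blast
      qed
    qed
    then show False using IH by blast
  qed
qed

lemma noinf: "2 \<le> n \<Longrightarrow> \<not> is_infinite_tower (KK n) (LL n) w"
proof (induction n arbitrary: w rule: nat_induct_at_least)
  case base then show ?case using level2 by simp
next
  case (Suc n) then show ?case using step_noinf by blast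
qed



primrec elt :: "nat \<Rightarrow> nat \<Rightarrow> nat list" where
  "elt 0 i = [[],[1],[2,1],[1,2,1]] ! i"
| "elt (Suc k) i = (if i < 2^(k+2) then elt k i
                     else elt k (i - 2^(k+2)) @ [Suc (k+2)] @ elt k (2^(k+2) - 1))"

lemma KL_set: "w \<in> KK n \<union> LL n \<Longrightarrow> set w \<subseteq> {1..n}"
  by (auto simp: KK_def LL_def)

lemma elt_props:
  "(\<forall>i<2^(k+2). (even i \<longrightarrow> elt k i \<in> KK (k+2)) \<and> (odd i \<longrightarrow> elt k i \<in> LL (k+2))) \<and>
   (\<forall>i. Suc i < 2^(k+2) \<longrightarrow> subseq (elt k i) (elt k (Suc i))) \<and> elt k 0 = []"
proof (induction k)
  case 0
  have m: "(even i \<longrightarrow> elt 0 i \<in> KK 2) \<and> (odd i \<longrightarrow> elt 0 i \<in> LL 2)" if "i < 4" for i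
  proof -
    have "i = 0 \<or> i = 1 \<or> i = 2 \<or> i = 3" using that by auto
    then show ?thesis by (auto simp: KK_def LL_def dA_def dB_def)
  qed
  have s: "subseq (elt 0 i) (elt 0 (Suc i))" if "Suc i < 4" for i
  proof -
    have "i = 0 \<or> i = 1 \<or> i = 2" using that by auto
    then show ?thesis by auto
  qed
  have two: "Suc (Suc 0) = 2" by simp
  show ?case using m s by (simp add: two)
next
  case (Suc k)
  define N where "N = (2::nat)^(k+2)"
  have N2: "2^(Suc k + 2) = 2 * N" by (simp add: N_def)
  have evN: "even N" by (simp add: N_def)
  have Npos: "0 < N" by (simp add: N_def)
  have IH1: "\<And>i. i < N \<Longrightarrow> (even i \<longrightarrow> elt k i \<in> KK (k+2)) \<and> (odd i \<longrightarrow> elt k i \<in> LL (k+2))"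
    using Suc.IH N_def by blast
  have IH2: "\<And>i. Suc i < N \<Longrightarrow> subseq (elt k i) (elt k (Suc i))"
    using Suc.IH N_def by blast
  have IH3: "elt k 0 = []" using Suc.IH by blast
  define z where "z = elt k (N - 1)"
  have zL: "z \<in> LL (k+2)" using IH1[of "N - 1"] Npos evN z_def by auto
  have zs: "set z \<subseteq> {1..k+2}" using zL KL_set by blast
  have eltS: "elt (Suc k) i = (if i < N then elt k i else elt k (i - N) @ [Suc (k+2)] @ z)" for i
    by (simp add: N_def z_def)
  have mem: "(even i \<longrightarrow> elt (Suc k) i \<in> KK (Suc k+2)) \<and> (odd i \<longrightarrow> elt (Suc k) i \<in> LL (Suc k+2))"
    if "i < 2 * N" for i
  proof (cases "i < N")
    case True
    then show ?thesis using IH1[OF True] eltS K_mono[of "k+2"] L_mono[of "k+2"] by auto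
  next
    case False
    have j: "i - N < N" using that False by simp
    have par: "even (i - N) \<longleftrightarrow> even i" using False evN by auto
    have e: "elt (Suc k) i = elt k (i - N) @ [Suc (k+2)] @ z" using eltS False by simp
    have k1: "elt k (i - N) \<in> KK (k+2) \<Longrightarrow> elt k (i - N) @ [Suc (k+2)] @ z \<in> KK (Suc (k+2))"
      using K_comp[of "k+2"] zs by simp
    have l1: "elt k (i - N) \<in> LL (k+2) \<Longrightarrow> elt k (i - N) @ [Suc (k+2)] @ z \<in> LL (Suc (k+2))"
      using L_comp[of "k+2"] zs by simp
    show ?thesis using IH1[OF j] par e k1 l1 by auto
  qed
  have sub: "subseq (elt (Suc k) i) (elt (Suc k) (Suc i))" if "Suc i < 2 * N" for i
  proof -
    consider "Suc i < N" | "Suc i = N" | "N \<le> i" by linarith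
    then show ?thesis
    proof cases
      case 1 then show ?thesis using IH2 eltS by simp
    next
      case 2
      then have "i < N" "i = N - 1" by auto
      then have "elt (Suc k) i = z" using eltS z_def by simp
      moreover have "elt (Suc k) (Suc i) = [Suc (k+2)] @ z" using eltS 2 IH3 by simp
      moreover have "subseq z ([Suc (k+2)] @ z)" by (rule list_emb_append2) (rule subseq_order.order_refl)
      ultimately show ?thesis by metis
    next
      case 3
      have a: "elt (Suc k) i = elt k (i - N) @ [Suc (k+2)] @ z" using eltS 3 by simp
      have b: "elt (Suc k) (Suc i) = elt k (Suc (i - N)) @ [Suc (k+2)] @ z" using eltS 3
        by (simp add: Suc_diff_le)
      have "subseq (elt k (i - N)) (elt k (Suc (i - N)))" using IH2 3 that by simp
      then show ?thesis using a b by (simp add: list_emb_append_mono)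
    qed
  qed
  have z0: "elt (Suc k) 0 = []" using eltS Npos IH3 by simp
  show ?case using mem sub z0 N2 Npos by simp
qed

lemma tower_main:
  assumes n2: "2 \<le> n"
  shows "is_tower (KK n) (LL n) (map (elt (n - 2)) [0..<2^n])"
proof -
  define k where "k = n - 2"
  have nk: "n = k + 2" using n2 k_def by simp
  note P = elt_props[of k]
  show ?thesis
    unfolding is_tower_def
  proof (intro conjI)
    show "map (elt (n - 2)) [0..<2 ^ n] \<noteq> []" by simp
    have "elt k 0 = []" using P by blast
    moreover have "[] \<in> KK n" by (simp add: KK_def)
    ultimately show "hd (map (elt (n - 2)) [0..<2 ^ n]) \<in> KK n \<union> LL n"
      using k_def by (simp add: hd_map upt_conv_Cons)
  next
    show "\<forall>i. Suc i < length (map (elt (n - 2)) [0..<2 ^ n]) \<longrightarrow>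
      subseq (map (elt (n - 2)) [0..<2 ^ n] ! i) (map (elt (n - 2)) [0..<2 ^ n] ! Suc i) \<and>
      (map (elt (n - 2)) [0..<2 ^ n] ! i \<in> KK n \<longrightarrow> map (elt (n - 2)) [0..<2 ^ n] ! Suc i \<in> LL n) \<and>
      (map (elt (n - 2)) [0..<2 ^ n] ! i \<in> LL n \<longrightarrow> map (elt (n - 2)) [0..<2 ^ n] ! Suc i \<in> KK n)"
  proof (intro allI impI)
    fix i assume i: "Suc i < length (map (elt (n - 2)) [0..<2 ^ n])"
    then have i': "Suc i < 2^(k+2)" using nk by simp
    have e1: "map (elt (n - 2)) [0..<2 ^ n] ! i = elt k i" using i' nk by simp
    have e2: "map (elt (n - 2)) [0..<2 ^ n] ! Suc i = elt k (Suc i)" using i' nk by simp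
    have mi: "(even i \<longrightarrow> elt k i \<in> KK n) \<and> (odd i \<longrightarrow> elt k i \<in> LL n)"
      using P i' nk by simp
    have ms: "(even (Suc i) \<longrightarrow> elt k (Suc i) \<in> KK n) \<and> (odd (Suc i) \<longrightarrow> elt k (Suc i) \<in> LL n)"
      using P i' nk by blast
    have d: "KK n \<inter> LL n = {}" by (rule disjKL)
    have "subseq (elt k i) (elt k (Suc i))" using P i' by blast
    moreover have "(elt k i \<in> KK n \<longrightarrow> elt k (Suc i) \<in> LL n) \<and> (elt k i \<in> LL n \<longrightarrow> elt k (Suc i) \<in> KK n)"
      using mi ms d by (cases "even i") auto
    ultimately show "subseq (map (elt (n - 2)) [0..<2 ^ n] ! i) (map (elt (n - 2)) [0..<2 ^ n] ! Suc i) \<and>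
      (map (elt (n - 2)) [0..<2 ^ n] ! i \<in> KK n \<longrightarrow> map (elt (n - 2)) [0..<2 ^ n] ! Suc i \<in> LL n) \<and>
      (map (elt (n - 2)) [0..<2 ^ n] ! i \<in> LL n \<longrightarrow> map (elt (n - 2)) [0..<2 ^ n] ! Suc i \<in> KK n)"
      using e1 e2 by simp
  qed
  qed
qed



lemma fold_sink: "(\<And>a. f s a = s) \<Longrightarrow> foldl f s w = s"
  by (induction w) auto

lemma fold_restr:
  assumes "\<And>a. f s a = s"
  shows "foldl (\<lambda>q a. if a \<in> S then f q a else s) q w = (if set w \<subseteq> S then foldl f q w else s)"
proof (induction w arbitrary: q)
  case (Cons a w)
  show ?case
  proof (cases "a \<in> S")
    case True then show ?thesis using Cons by simp
  next
    case False
    have "foldl (\<lambda>q a. if a \<in> S then f q a else s) s w = s"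
      by (rule fold_sink) (simp add: assms)
    then show ?thesis using False by simp
  qed
qed simp

lemma dA_sink: "dA 1 a = 1" by (simp add: dA_def)
lemma dB_sink: "dB 2 a = 2" by (simp add: dB_def)

lemma lang1:
  assumes "1 \<le> n" "{1..n} \<subseteq> S"
  shows "dfa_lang S (\<lambda>q a. if a \<in> {1..n} then dA q a else 1) 0 ({0..n} - {1}) = KK n"
proof -
  have f: "foldl (\<lambda>q a. if a \<in> {1..n} then dA q a else 1) 0 w =
           (if set w \<subseteq> {1..n} then foldl dA 0 w else 1)" for w
    by (rule fold_restr) (rule dA_sink)
  show ?thesis
    unfolding dfa_lang_def KK_def
  proof (intro Set.set_eqI iffI)
    fix w assume "w \<in> {w. set w \<subseteq> S \<and> foldl (\<lambda>q a. if a \<in> {1..n} then dA q a else 1) 0 w \<in> {0..n} - {1}}"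
    then show "w \<in> {w. set w \<subseteq> {1..n} \<and> foldl dA 0 w \<noteq> 1}" using f[of w] by (auto split: if_splits)
  next
    fix w assume w: "w \<in> {w. set w \<subseteq> {1..n} \<and> foldl dA 0 w \<noteq> 1}"
    then have "foldl dA 0 w \<le> n" using boundA[of 0 n w] assms(1) by simp
    then show "w \<in> {w. set w \<subseteq> S \<and> foldl (\<lambda>q a. if a \<in> {1..n} then dA q a else 1) 0 w \<in> {0..n} - {1}}"
      using w f[of w] assms(2) by auto
  qed
qed

lemma lang2:
  assumes "2 \<le> n" "{1..n} \<subseteq> S"
  shows "dfa_lang S (\<lambda>q a. if a \<in> {1..n} then dB q a else 2) 0 ({0..n} - {0,2}) = LL n"
proof -
  have f: "foldl (\<lambda>q a. if a \<in> {1..n} then dB q a else 2) 0 w =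
           (if set w \<subseteq> {1..n} then foldl dB 0 w else 2)" for w
    by (rule fold_restr) (rule dB_sink)
  show ?thesis
    unfolding dfa_lang_def LL_def
  proof (intro Set.set_eqI iffI)
    fix w assume "w \<in> {w. set w \<subseteq> S \<and> foldl (\<lambda>q a. if a \<in> {1..n} then dB q a else 2) 0 w \<in> {0..n} - {0,2}}"
    then show "w \<in> {w. set w \<subseteq> {1..n} \<and> foldl dB 0 w \<notin> {0,2}}" using f[of w] by (auto split: if_splits)
  next
    fix w assume w: "w \<in> {w. set w \<subseteq> {1..n} \<and> foldl dB 0 w \<notin> {0,2}}"
    then have "foldl dB 0 w \<le> n" using boundB[of 0 n w] assms(1) by simp
    then show "w \<in> {w. set w \<subseteq> S \<and> foldl (\<lambda>q a. if a \<in> {1..n} then dB q a else 2) 0 w \<in> {0..n} - {0,2}}"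
      using w f[of w] assms(2) by auto
  qed
qed

lemma dfa1: "1 \<le> n \<Longrightarrow> is_dfa {0..n} {1..M} (\<lambda>q a. if a \<in> {1..n} then dA q a else 1) 0 ({0..n} - {1})"
  unfolding is_dfa_def by (auto simp: dA_def)

lemma dfa2: "2 \<le> n \<Longrightarrow> is_dfa {0..n} {1..M} (\<lambda>q a. if a \<in> {1..n} then dB q a else 2) 0 ({0..n} - {0,2})"
  unfolding is_dfa_def by (auto simp: dB_def)

lemma n_le_M: "2 \<le> (n::nat) \<Longrightarrow> n \<le> n * (n + 1) div 2 + 1"
proof -
  assume "2 \<le> n"
  have "2 * n \<le> n * (n + 1)" using \<open>2 \<le> n\<close> by (simp add: mult.commute)
  then have "(2 * n) div 2 \<le> n * (n + 1) div 2" by (metis div_le_mono)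
  then show ?thesis by simp
qed

lemma case_big:
  assumes n2: "2 \<le> (n::nat)"
  shows "\<exists>(Sig :: nat set) (Q1 :: nat set) d1 s1 F1 (Q2 :: nat set) d2 s2 F2.
           card Sig = n * (n + 1) div 2 + 1 \<and>
           is_dfa Q1 Sig d1 s1 F1 \<and> card Q1 \<le> n + 1 \<and>
           is_dfa Q2 Sig d2 s2 F2 \<and> card Q2 \<le> n + 1 \<and>
           (\<exists>ws. is_tower (dfa_lang Sig d1 s1 F1) (dfa_lang Sig d2 s2 F2) ws
                 \<and> length ws = 2 ^ n) \<and>
           \<not> (\<exists>w. is_infinite_tower (dfa_lang Sig d1 s1 F1) (dfa_lang Sig d2 s2 F2) w)"
proof -
  define M where "M = n * (n + 1) div 2 + 1"
  have sub: "{1..n} \<subseteq> {1..M}" using n_le_M[OF n2] M_def by auto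
  have l1: "dfa_lang {1..M} (\<lambda>q a. if a \<in> {1..n} then dA q a else 1) 0 ({0..n} - {1}) = KK n"
    using lang1[OF _ sub] n2 by simp
  have l2: "dfa_lang {1..M} (\<lambda>q a. if a \<in> {1..n} then dB q a else 2) 0 ({0..n} - {0,2}) = LL n"
    using lang2[OF n2 sub] .
  have c: "card {1..M} = n * (n + 1) div 2 + 1" using M_def by simp
  have D1: "is_dfa {0..n} {1..M} (\<lambda>q a. if a \<in> {1..n} then dA q a else 1) 0 ({0..n} - {1})"
    using dfa1 n2 by simp
  have D2: "is_dfa {0..n} {1..M} (\<lambda>q a. if a \<in> {1..n} then dB q a else 2) 0 ({0..n} - {0,2})"
    using dfa2 n2 by simp
  have T: "is_tower (KK n) (LL n) (map (elt (n - 2)) [0..<2^n]) \<and> length (map (elt (n - 2)) [0..<2^n]) = 2^n"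
    using tower_main[OF n2] by simp
  have NI: "\<not> (\<exists>w. is_infinite_tower (KK n) (LL n) w)" using noinf[OF n2] by blast
  show ?thesis
    apply (rule exI[of _ "{1..M}"], rule exI[of _ "{0..n}"], rule exI[of _ "\<lambda>q a. if a \<in> {1..n} then dA q a else 1"],
        rule exI[of _ "0"], rule exI[of _ "{0..n} - {1}"], rule exI[of _ "{0..n}"], rule exI[of _ "\<lambda>q a. if a \<in> {1..n} then dB q a else 2"],
        rule exI[of _ "0"], rule exI[of _ "{0..n} - {0,2}"])
    apply (simp only: l1 l2)
    using c D1 D2 T NI by auto
qed



lemma fold_const0: "foldl (\<lambda>q a. (0::nat)) 0 w = 0"
  by (induction w) auto

lemma fold_const1: "foldl (\<lambda>q a. (1::nat)) q w = (if w = [] then q else 1)"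
proof (induction w arbitrary: q)
  case (Cons a w) then show ?case by (cases w) auto
qed simp

lemma fold_constS: "foldl (\<lambda>q a. Suc 0) q w = (if w = [] then q else Suc 0)"
proof (induction w arbitrary: q)
  case (Cons a w) then show ?case by (cases w) auto
qed simp

lemma case0:
  "\<exists>(Sig :: nat set) (Q1 :: nat set) d1 s1 F1 (Q2 :: nat set) d2 s2 F2.
           card Sig = 0 * (0 + 1) div 2 + 1 \<and>
           is_dfa Q1 Sig d1 s1 F1 \<and> card Q1 \<le> 0 + 1 \<and>
           is_dfa Q2 Sig d2 s2 F2 \<and> card Q2 \<le> 0 + 1 \<and>
           (\<exists>ws. is_tower (dfa_lang Sig d1 s1 F1) (dfa_lang Sig d2 s2 F2) ws
                 \<and> length ws = 2 ^ 0) \<and>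
           \<not> (\<exists>w. is_infinite_tower (dfa_lang Sig d1 s1 F1) (dfa_lang Sig d2 s2 F2) w)"
proof -
  define K where "K = dfa_lang {1::nat} (\<lambda>q a. (0::nat)) 0 {0}"
  define L where "L = dfa_lang {1::nat} (\<lambda>q a. (0::nat)) 0 {}"
  have L0: "L = {}" by (simp add: L_def dfa_lang_def)
  have K0: "[] \<in> K" by (simp add: K_def dfa_lang_def)
  have D1: "is_dfa {0::nat} {1::nat} (\<lambda>q a. 0) 0 {0}" by (simp add: is_dfa_def)
  have D2: "is_dfa {0::nat} {1::nat} (\<lambda>q a. 0) 0 {}" by (simp add: is_dfa_def)
  have T: "is_tower K L [[]]" using K0 by (simp add: is_tower_def)
  have NI: "\<not> (\<exists>w. is_infinite_tower K L w)"
    using L0 by (auto simp: is_infinite_tower_def)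
  show ?thesis
    apply (rule exI[of _ "{1::nat}"], rule exI[of _ "{0::nat}"], rule exI[of _ "\<lambda>q a. (0::nat)"],
        rule exI[of _ "0"], rule exI[of _ "{0}"], rule exI[of _ "{0::nat}"], rule exI[of _ "\<lambda>q a. (0::nat)"],
        rule exI[of _ "0"], rule exI[of _ "{}"])
    using D1 D2 T NI K_def L_def by (auto intro!: exI[of _ "[[]]"])
qed

lemma case1:
  "\<exists>(Sig :: nat set) (Q1 :: nat set) d1 s1 F1 (Q2 :: nat set) d2 s2 F2.
           card Sig = 1 * (1 + 1) div 2 + 1 \<and>
           is_dfa Q1 Sig d1 s1 F1 \<and> card Q1 \<le> 1 + 1 \<and>
           is_dfa Q2 Sig d2 s2 F2 \<and> card Q2 \<le> 1 + 1 \<and>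
           (\<exists>ws. is_tower (dfa_lang Sig d1 s1 F1) (dfa_lang Sig d2 s2 F2) ws
                 \<and> length ws = 2 ^ 1) \<and>
           \<not> (\<exists>w. is_infinite_tower (dfa_lang Sig d1 s1 F1) (dfa_lang Sig d2 s2 F2) w)"
proof -
  define K where "K = dfa_lang {1::nat, 2} (\<lambda>q a. (1::nat)) 0 {0}"
  define L where "L = dfa_lang {1::nat, 2} (\<lambda>q a. (1::nat)) 0 {1}"
  have K1: "K = {[]}" by (auto simp: K_def dfa_lang_def fold_const1 fold_constS)
  have L1: "[] \<notin> L" "[1] \<in> L" by (auto simp: L_def dfa_lang_def fold_const1 fold_constS)
  have D1: "is_dfa {0::nat, 1} {1::nat, 2} (\<lambda>q a. 1) 0 {0}" by (simp add: is_dfa_def)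
  have D2: "is_dfa {0::nat, 1} {1::nat, 2} (\<lambda>q a. 1) 0 {1}" by (simp add: is_dfa_def)
  have T: "is_tower K L [[], [1]]"
    unfolding is_tower_def using K1 L1 by (auto simp: less_Suc_eq)
  have NI: "\<not> (\<exists>w. is_infinite_tower K L w)"
  proof
    assume "\<exists>w. is_infinite_tower K L w"
    then obtain w where W: "is_infinite_tower K L w" by blast
    have key: "w i \<notin> L" for i
    proof
      assume l: "w i \<in> L"
      then have "w (Suc i) = []" using itK[OF W] itL[OF W, of i] K1 by blast
      then have "w i = []" using itS[OF W, of i] by simp
      then show False using l L1 by simp
    qed
    have "w 0 \<in> K" using itower_mem[OF W, of 0] key by blast
    then have "w 1 \<in> L" using itK[OF W, of 0] by simp
    then show False using key by blast
  qed
  have c: "card {1::nat, 2} = 1 * (1 + 1) div 2 + 1" by simp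
  show ?thesis
    apply (rule exI[of _ "{1::nat, 2}"], rule exI[of _ "{0::nat, 1}"], rule exI[of _ "\<lambda>q a. (1::nat)"],
        rule exI[of _ "0"], rule exI[of _ "{0}"], rule exI[of _ "{0::nat, 1}"], rule exI[of _ "\<lambda>q a. (1::nat)"],
        rule exI[of _ "0"], rule exI[of _ "{1}"])
    using c D1 D2 T NI K_def L_def by (auto intro!: exI[of _ "[[], [1]]"])
qed

theorem theorem11:
  fixes n :: nat
  shows "\<exists>(Sig :: nat set) (Q1 :: nat set) d1 s1 F1 (Q2 :: nat set) d2 s2 F2.
           card Sig = n * (n + 1) div 2 + 1 \<and>
           is_dfa Q1 Sig d1 s1 F1 \<and> card Q1 \<le> n + 1 \<and>
           is_dfa Q2 Sig d2 s2 F2 \<and> card Q2 \<le> n + 1 \<and>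
           (\<exists>ws. is_tower (dfa_lang Sig d1 s1 F1) (dfa_lang Sig d2 s2 F2) ws
                 \<and> length ws = 2 ^ n) \<and>
           \<not> (\<exists>w. is_infinite_tower (dfa_lang Sig d1 s1 F1) (dfa_lang Sig d2 s2 F2) w)"
proof -
  consider "n = 0" | "n = 1" | "2 \<le> n" by linarith
  then show ?thesis
  proof cases
    case 1 then show ?thesis using case0 by simp
  next
    case 2 then show ?thesis using case1 by simp
  next
    case 3 then show ?thesis by (rule case_big)
  qed
qed


end
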